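(* Let $S$ be an Arf numerical semigroup and let $a,R$ be positive integers. Then $\overline{S}=aS\cup\{m\in\mathbb{N}_0:\ m\ge R\}$ is an Arf semigroup.
   Context: A numerical semigroup is a submonoid $S$ of $(\mathbb{N}_0,+)$ with finite complement, with elements listed increasingly $\rho_1=0<\rho_2<\cdots$. $S$ is Arf if $\rho_i+\rho_j-\rho_k\in S$ for all positive integers $i\ge j\ge k$. $aS=\{as:\ s\in S\}$. *)

theory Defs
  imports Main
begin

definition numerical_semigroup :: "nat set \<Rightarrow> bool" where
  "numerical_semigroup S \<longleftrightarrow> 0 \<in> S \<and> (\<forall>x\<in>S. \<forall>y\<in>S. x + y \<in> S) \<and> finite (UNIV - S)"

text \<open>Arf: rho_i + rho_j - rho_k in S whenever i >= j >= k, i.e. for all elements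
  x >= y >= z of S (elements listed increasingly).\<close>
definition Arf :: "nat set \<Rightarrow> bool" where
  "Arf S \<longleftrightarrow> numerical_semigroup S \<and>
     (\<forall>x\<in>S. \<forall>y\<in>S. \<forall>z\<in>S. x \<ge> y \<and> y \<ge> z \<longrightarrow> x + y - z \<in> S)"

end

theory Submission
  imports Defs
begin

theorem mainTheorem10:
  fixes S :: "nat set" and a R :: nat
  assumes "Arf S" and "a > 0" and "R > 0"
  shows "Arf ((\<lambda>s. a * s) ` S \<union> {m. m \<ge> R})"
proof -
  let ?T = "(\<lambda>s. a * s) ` S \<union> {m. m \<ge> R}"
  have ns: "numerical_semigroup S" and arf: "\<And>x y z. x\<in>S \<Longrightarrow> y\<in>S \<Longrightarrow> z\<in>S \<Longrightarrow> x \<ge> y \<Longrightarrow> y \<ge> z \<Longrightarrow> x + y - z \<in> S"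
    using assms(1) unfolding Arf_def by auto
  have z: "0 \<in> S" and cl: "\<And>x y. x\<in>S \<Longrightarrow> y\<in>S \<Longrightarrow> x + y \<in> S"
    using ns unfolding numerical_semigroup_def by auto
  have "0 \<in> ?T" using z by force
  moreover have "\<forall>x\<in>?T. \<forall>y\<in>?T. x + y \<in> ?T"
  proof (intro ballI)
    fix x y assume x: "x \<in> ?T" and y: "y \<in> ?T"
    show "x + y \<in> ?T"
    proof (cases "x \<ge> R \<or> y \<ge> R")
      case True then show ?thesis by auto
    next
      case False
      then obtain s t where "s \<in> S" "t \<in> S" "x = a*s" "y = a*t" using x y by auto
      then have "x + y = a * (s+t)" "s + t \<in> S" using cl by (auto simp: algebra_simps)
      then show ?thesis by blast
    qed
  qed
  moreover have "finite (UNIV - ?T)"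
    by (rule finite_subset[of _ "{..<R}"]) auto
  moreover have "\<forall>x\<in>?T. \<forall>y\<in>?T. \<forall>z\<in>?T. x \<ge> y \<and> y \<ge> z \<longrightarrow> x + y - z \<in> ?T"
  proof (intro ballI impI)
    fix x y z assume x: "x \<in> ?T" and y: "y \<in> ?T" and zz: "z \<in> ?T" and o: "x \<ge> y \<and> y \<ge> z"
    show "x + y - z \<in> ?T"
    proof (cases "x \<ge> R")
      case True then show ?thesis using o by auto
    next
      case False
      then obtain s t u where st: "s \<in> S" "t \<in> S" "u \<in> S" "x = a*s" "y = a*t" "z = a*u"
        using x y zz o by auto
      have "s \<ge> t" "t \<ge> u" using o st assms(2) by auto
      then have "s + t - u \<in> S" using arf st by auto
      moreover have "x + y - z = a * (s + t - u)" using st by (simp add: algebra_simps diff_mult_distrib2)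
      ultimately show ?thesis by blast
    qed
  qed
  ultimately show ?thesis unfolding Arf_def numerical_semigroup_def by blast
qed

end
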